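(* Let $G$ be a finite group and let $\operatorname P$ and $\operatorname R$ be projection operators on the group algebra $\mathbb C G$. If $\operatorname P$ commutes with the projection onto each group element (i.e. onto the span of each basis vector $g\in G$), and $\operatorname R$ commutes with left multiplication by every element of $G$, then $$\|\operatorname{PR}\|^2\le \frac{\operatorname{rank}\operatorname P\cdot\operatorname{rank}\operatorname R}{|G|}.$$
   Context: $\mathbb C G$ is identified with $L^2(G)$ (functions on $G$), with the group elements forming an orthonormal basis; "projection operator" means orthogonal projection (self-adjoint idempotent). Left multiplication by $x$ is $[\operatorname L_x f](y)=f(x^{-1}y)$. $\|\cdot\|$ denotes operator norm. *)

theory Defs
  imports "HOL-Analysis.Analysis" "HOL-Algebra.Group"
begin

text \<open>Operators on L2(G) = complex valued functions on the finite type 'g, represented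
  as complex matrices indexed by 'g (vectors complex^'g carry the L2 norm).\<close>

definition basis_proj :: "'g::finite \<Rightarrow> complex^'g^'g" where
  "basis_proj g = (\<chi> i j. if i = g \<and> j = g then 1 else 0)"

definition left_mult :: "('g::finite, 'b) monoid_scheme \<Rightarrow> 'g \<Rightarrow> complex^'g^'g" where
  "left_mult G x = (\<chi> y z. if z = inv\<^bsub>G\<^esub> x \<otimes>\<^bsub>G\<^esub> y then 1 else 0)"

definition adjoint_mat :: "complex^'n^'n \<Rightarrow> complex^'n^'n" where
  "adjoint_mat A = (\<chi> i j. cnj (A $ j $ i))"

definition is_projection :: "complex^'n^'n \<Rightarrow> bool" where
  "is_projection A \<longleftrightarrow> A ** A = A \<and> adjoint_mat A = A"

definition crank :: "complex^'n^'n \<Rightarrow> nat" where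
  "crank A = vector_space.dim (\<lambda>c (v::complex^'n). c *s v) (range (\<lambda>v. A *v v))"

end

theory Submission
  imports Defs
begin

lemma norm_sq_vec: "(norm (x::complex^'n))^2 = (\<Sum>i\<in>UNIV. (cmod (x$i))^2)"
  unfolding norm_vec_def L2_set_def by (simp add: sum_nonneg)

lemma onorm_frob:
  fixes A :: "complex^'n^'n"
  shows "(onorm (\<lambda>v. A *v v))\<^sup>2 \<le> (\<Sum>i\<in>UNIV. \<Sum>j\<in>UNIV. (cmod (A$i$j))^2)"
proof -
  define F where "F = (\<Sum>i\<in>UNIV. \<Sum>j\<in>UNIV. (cmod (A$i$j))^2)"
  have F0: "0 \<le> F" unfolding F_def by (simp add: sum_nonneg)
  have row: "(cmod ((A *v v)$i))^2 \<le> (\<Sum>j\<in>UNIV. (cmod (A$i$j))^2) * (norm v)^2" for v i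
  proof -
    have "cmod ((A *v v)$i) = cmod (\<Sum>j\<in>UNIV. A$i$j * v$j)" by (simp add: matrix_vector_mult_def)
    also have "\<dots> \<le> (\<Sum>j\<in>UNIV. \<bar>cmod (A$i$j)\<bar> * \<bar>cmod (v$j)\<bar>)"
      by (rule order_trans[OF norm_sum]) (simp add: norm_mult)
    also have "\<dots> \<le> L2_set (\<lambda>j. cmod (A$i$j)) UNIV * L2_set (\<lambda>j. cmod (v$j)) UNIV"
      by (rule L2_set_mult_ineq)
    finally have le: "cmod ((A *v v)$i) \<le> L2_set (\<lambda>j. cmod (A$i$j)) UNIV * norm v"
      by (simp add: norm_vec_def)
    have "(cmod ((A *v v)$i))^2 \<le> (L2_set (\<lambda>j. cmod (A$i$j)) UNIV * norm v)^2"
      by (rule power_mono[OF le norm_ge_zero])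
    also have "\<dots> = (\<Sum>j\<in>UNIV. (cmod (A$i$j))^2) * (norm v)^2"
      by (simp add: power_mult_distrib L2_set_def sum_nonneg)
    finally show ?thesis .
  qed
  have bnd: "norm (A *v v) \<le> sqrt F * norm v" for v
  proof -
    have "(norm (A *v v))^2 \<le> F * (norm v)^2"
      unfolding norm_sq_vec[of "A *v v"] F_def sum_distrib_right[of _ UNIV "(norm v)^2"]
      by (rule sum_mono) (simp add: row flip: sum_distrib_right)
    then have "sqrt ((norm (A *v v))^2) \<le> sqrt (F * (norm v)^2)" by (rule real_sqrt_le_mono)
    then show ?thesis by (simp add: real_sqrt_mult)
  qed
  have "onorm (\<lambda>v. A *v v) \<le> sqrt F" by (rule onorm_le) (rule bnd)
  moreover have "0 \<le> onorm (\<lambda>v. A *v v)" by (rule onorm_pos_le) simp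
  ultimately have "(onorm (\<lambda>v. A *v v))^2 \<le> (sqrt F)^2" by (rule power_mono)
  then show ?thesis using F0 F_def by simp
qed

lemma trace_idem:
  fixes A :: "'a::field^'n^'n"
  assumes AA: "A ** A = A"
  shows "(\<Sum>i\<in>UNIV. A$i$i) = of_nat (vec.dim (range (\<lambda>v. A *v v)))"
proof -
  define V where "V = range (\<lambda>v. A *v v)"
  obtain B where BV: "B \<subseteq> V" and indB: "vec.independent B" and VB: "V \<subseteq> vec.span B"
     and cB: "card B = vec.dim V"
    using vec.basis_exists by blast
  have fB: "finite B" using indB vec.finiteI_independent by blast
  have colV: "(\<chi> j. A$j$i) \<in> V" for i
  proof -
    have "A *v axis i 1 = (\<chi> j. A$j$i)"
      by (simp add: matrix_vector_mult_def axis_def vec_eq_iff if_distrib cong: if_cong)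
    then show ?thesis unfolding V_def by (metis rangeI)
  qed
  have "\<forall>i. \<exists>u. (\<chi> j. A$j$i) = (\<Sum>b\<in>B. u b *s b)"
  proof
    fix i
    have "(\<chi> j. A$j$i) \<in> vec.span B" using colV VB by blast
    then show "\<exists>u. (\<chi> j. A$j$i) = (\<Sum>b\<in>B. u b *s b)"
      using vec.span_finite[OF fB] by auto
  qed
  then obtain m where m: "\<And>i. (\<chi> j. A$j$i) = (\<Sum>b\<in>B. m i b *s b)" by metis
  have Ajk: "A$j$i = (\<Sum>b\<in>B. m i b * b$j)" for i j
  proof -
    have "A$j$i = (\<chi> j. A$j$i)$j" by simp
    also have "\<dots> = (\<Sum>b\<in>B. m i b * b$j)" by (subst m) (simp add: sum_component)
    finally show ?thesis .
  qed
  have key: "(\<Sum>i\<in>UNIV. m i b * b$i) = 1" if bB: "b \<in> B" for b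
  proof -
    define c where "c b' = (\<Sum>i\<in>UNIV. m i b' * b$i)" for b'
    have "b \<in> V" using bB BV by blast
    then obtain w where bw: "b = A *v w" unfolding V_def by blast
    have Ab: "A *v b = b" unfolding bw matrix_vector_mul_assoc AA ..
    have bexp: "b = (\<Sum>b'\<in>B. c b' *s b')"
    proof (subst vec_eq_iff, intro allI)
      fix j
      have "b$j = (A *v b)$j" using Ab by simp
      also have "\<dots> = (\<Sum>i\<in>UNIV. A$j$i * b$i)" by (simp add: matrix_vector_mult_def)
      also have "\<dots> = (\<Sum>i\<in>UNIV. \<Sum>b'\<in>B. m i b' * b'$j * b$i)"
        by (simp add: Ajk sum_distrib_right)
      also have "\<dots> = (\<Sum>b'\<in>B. c b' * b'$j)"
        unfolding c_def by (subst sum.swap) (simp add: sum_distrib_left mult.commute mult.left_commute)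
      also have "\<dots> = (\<Sum>b'\<in>B. c b' *s b')$j" by (simp add: sum_component)
      finally show "b$j = (\<Sum>b'\<in>B. c b' *s b')$j" .
    qed
    then have "(\<Sum>b'\<in>B. (c b' - (if b' = b then 1 else 0)) *s b') = 0"
    proof -
      have "(\<Sum>b'\<in>B. (c b' - (if b' = b then 1 else 0)) *s b') =
            (\<Sum>b'\<in>B. c b' *s b') - (\<Sum>b'\<in>B. (if b' = b then 1 else 0) *s b')"
        by (simp add: vec.scale_left_diff_distrib sum_subtractf)
      also have "(\<Sum>b'\<in>B. (if b' = b then 1 else 0) *s b') = (\<Sum>b'\<in>B. if b' = b then b' else 0)"
        by (rule sum.cong) auto
      also have "\<dots> = b" using bB fB by simp
      finally show ?thesis using bexp[symmetric] by simp
    qed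
    then have "c b - (if b = b then 1 else 0) = 0"
    proof -
      assume h: "(\<Sum>b'\<in>B. (c b' - (if b' = b then 1 else 0)) *s b') = 0"
      show ?thesis
      proof (rule ccontr)
        assume "c b - (if b = b then 1 else 0) \<noteq> 0"
        then have "vec.dependent B"
          unfolding vec.dependent_finite[OF fB]
        proof (intro exI conjI)
          show "\<exists>v\<in>B. (c v - (if v = b then 1 else 0)) \<noteq> 0"
            using bB \<open>c b - (if b = b then 1 else 0) \<noteq> 0\<close> by blast
          show "(\<Sum>v\<in>B. (c v - (if v = b then 1 else 0)) *s v) = 0" by (rule h)
        qed
        then show False using indB by blast
      qed
    qed
    then show ?thesis unfolding c_def by simp
  qed
  have "(\<Sum>i\<in>UNIV. A$i$i) = (\<Sum>b\<in>B. \<Sum>i\<in>UNIV. m i b * b$i)"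
    by (simp add: Ajk) (rule sum.swap)
  also have "\<dots> = (\<Sum>b\<in>B. 1)" using key by simp
  also have "\<dots> = of_nat (card B)" by simp
  finally show ?thesis using cB V_def by simp
qed


theorem corollary1:
  fixes G :: "('g::finite, 'b) monoid_scheme"
    and P R :: "complex^'g^'g"
  assumes "group G" and "carrier G = UNIV"
    and "is_projection P" and "is_projection R"
    and "\<And>g. P ** basis_proj g = basis_proj g ** P"
    and "\<And>x. x \<in> carrier G \<Longrightarrow> R ** left_mult G x = left_mult G x ** R"
  shows "(onorm (\<lambda>v. (P ** R) *v v))\<^sup>2 \<le> real (crank P) * real (crank R) / real CARD('g)"
proof -
  interpret group G by fact
  have PP: "P ** P = P" and RR: "R ** R = R" and Radj: "adjoint_mat R = R"
    using assms(3,4) unfolding is_projection_def by auto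
  have Poff: "P$i$j = 0" if "i \<noteq> j" for i j
  proof -
    have "(P ** basis_proj j)$i$j = (basis_proj j ** P)$i$j" using assms(5) by simp
    then show ?thesis using that
      by (simp add: matrix_matrix_mult_def basis_proj_def if_distrib cong: if_cong)
  qed
  have Pdiag: "P$i$i = P$i$i * P$i$i" for i
  proof -
    have "P$i$i = (P ** P)$i$i" using PP by simp
    also have "\<dots> = (\<Sum>k\<in>UNIV. P$i$k * P$k$i)" by (simp add: matrix_matrix_mult_def)
    also have "\<dots> = P$i$i * P$i$i"
      by (subst sum.remove[of _ i]) (auto simp: Poff intro!: sum.neutral)
    finally show ?thesis .
  qed
  have P01: "P$i$i = 0 \<or> P$i$i = 1" for i
    using Pdiag[of i] by (metis mult_cancel_right1 mult_zero_left)
  have PR: "(P ** R)$i$j = P$i$i * R$i$j" for i j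
  proof -
    have "(P ** R)$i$j = (\<Sum>k\<in>UNIV. P$i$k * R$k$j)" by (simp add: matrix_matrix_mult_def)
    also have "\<dots> = P$i$i * R$i$j"
      by (subst sum.remove[of _ i]) (auto simp: Poff intro!: sum.neutral)
    finally show ?thesis .
  qed
  have Rcnj: "cnj (R$i$k) = R$k$i" for i k
  proof -
    have "adjoint_mat R $k$i = R$k$i" using Radj by simp
    then show ?thesis by (simp add: adjoint_mat_def)
  qed
  have Rrow: "(\<Sum>k\<in>UNIV. (cmod (R$i$k))^2) = Re (R$i$i)" for i
  proof -
    have "R$i$i = (R ** R)$i$i" using RR by simp
    also have "\<dots> = (\<Sum>k\<in>UNIV. R$i$k * R$k$i)" by (simp add: matrix_matrix_mult_def)
    also have "\<dots> = (\<Sum>k\<in>UNIV. of_real ((cmod (R$i$k))^2))"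
      by (intro sum.cong refl) (metis complex_norm_square Rcnj)
    finally show ?thesis by simp
  qed
  have Rconst: "R$x$x = R$\<one>\<^bsub>G\<^esub>$\<one>\<^bsub>G\<^esub>" for x
  proof -
    have xc: "x \<in> carrier G" using assms(2) by simp
    have eq: "(R ** left_mult G x)$x$\<one>\<^bsub>G\<^esub> = (left_mult G x ** R)$x$\<one>\<^bsub>G\<^esub>"
      using assms(6)[OF xc] by simp
    have l: "(R ** left_mult G x)$x$\<one>\<^bsub>G\<^esub> = R$x$x"
    proof -
      have "(R ** left_mult G x)$x$\<one>\<^bsub>G\<^esub>
          = (\<Sum>k\<in>UNIV. R$x$k * (if \<one>\<^bsub>G\<^esub> = inv\<^bsub>G\<^esub> x \<otimes>\<^bsub>G\<^esub> k then 1 else 0))"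
        by (simp add: matrix_matrix_mult_def left_mult_def)
      also have "\<dots> = (\<Sum>k\<in>UNIV. R$x$k * (if k = x then 1 else 0))"
        using assms(2) by (intro sum.cong refl) (simp add: inv_solve_left)
      finally show ?thesis by (simp add: if_distrib cong: if_cong)
    qed
    have r: "(left_mult G x ** R)$x$\<one>\<^bsub>G\<^esub> = R$\<one>\<^bsub>G\<^esub>$\<one>\<^bsub>G\<^esub>"
    proof -
      have "(left_mult G x ** R)$x$\<one>\<^bsub>G\<^esub>
          = (\<Sum>k\<in>UNIV. (if k = inv\<^bsub>G\<^esub> x \<otimes>\<^bsub>G\<^esub> x then 1 else 0) * R$k$\<one>\<^bsub>G\<^esub>)"
        by (simp add: matrix_matrix_mult_def left_mult_def)
      also have "\<dots> = (\<Sum>k\<in>UNIV. if k = \<one>\<^bsub>G\<^esub> then R$k$\<one>\<^bsub>G\<^esub> else 0)"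
        using xc by (intro sum.cong refl) simp
      finally show ?thesis by simp
    qed
    show ?thesis using eq l r by simp
  qed
  define c where "c = Re (R$\<one>\<^bsub>G\<^esub>$\<one>\<^bsub>G\<^esub>)"
  have Rc: "Re (R$i$i) = c" for i unfolding c_def using Rconst[of i] by metis
  have trR: "of_nat (crank R) = (\<Sum>i\<in>UNIV. R$i$i)"
    unfolding crank_def using trace_idem[OF RR] by simp
  have crR: "real (crank R) = real CARD('g) * c"
  proof -
    have "real (crank R) = Re (of_nat (crank R))" by simp
    also have "\<dots> = (\<Sum>i\<in>UNIV. Re (R$i$i))" by (simp add: trR)
    also have "\<dots> = real CARD('g) * c" by (simp add: Rc)
    finally show ?thesis .
  qed
  have trP: "of_nat (crank P) = (\<Sum>i\<in>UNIV. P$i$i)"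
    unfolding crank_def using trace_idem[OF PP] by simp
  have crP: "real (crank P) = (\<Sum>i\<in>UNIV. Re (P$i$i))"
  proof -
    have "real (crank P) = Re (of_nat (crank P))" by simp
    also have "\<dots> = (\<Sum>i\<in>UNIV. Re (P$i$i))" by (simp add: trP)
    finally show ?thesis .
  qed
  have cmP: "(cmod (P$i$i))^2 = Re (P$i$i)" for i
    using P01[of i] by auto
  have "(onorm (\<lambda>v. (P ** R) *v v))\<^sup>2 \<le> (\<Sum>i\<in>UNIV. \<Sum>j\<in>UNIV. (cmod ((P ** R)$i$j))^2)"
    by (rule onorm_frob)
  also have "\<dots> = (\<Sum>i\<in>UNIV. Re (P$i$i) * (\<Sum>j\<in>UNIV. (cmod (R$i$j))^2))"
    by (simp add: PR norm_mult power_mult_distrib cmP sum_distrib_left)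
  also have "\<dots> = (\<Sum>i\<in>UNIV. Re (P$i$i)) * c"
    by (simp add: Rrow Rc sum_distrib_right)
  also have "\<dots> = real (crank P) * real (crank R) / real CARD('g)"
    by (simp add: crP crR)
  finally show ?thesis .
qed

end
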